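(* Let $n\ge2$ and let $\mathcal{S}$ be a quadric hypersurface in $\mathbb{R}^n$ containing at least two points but no line, with an affine change of variables $\mathbf{s}=T\mathbf{s}'+\mathbf{v}$ bringing it into one of the normal forms (1)–(3), and with the associated parameterisation $\boldsymbol{\sigma}(\mathbf{t})=T\boldsymbol{\sigma}'(\mathbf{t})+\mathbf{v}$, $\mathbf{t}\in D$, described in the context. Let $O\subseteq D\setminus\sigma_1^{-1}(0)$ be an open set. If there is $\mathbf{t}\in O$ such that \[\det\left(\frac{\partial\overline{\boldsymbol{\sigma}}'(\mathbf{t})}{\partial\mathbf{t}}\right)\neq0,\] where $\overline{\boldsymbol{\sigma}}'=(\sigma_1',\dots,\sigma_{n-1}')^T$, then $\boldsymbol{\sigma}(O)=\{\boldsymbol{\sigma}(\mathbf{t}):\mathbf{t}\in O\}$ is not contained in any (affine) hyperplane of $\mathbb{R}^n$ (i.e. $O$ satisfies the hyperplane condition).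
   Context: Let $\mathcal{S}=\{\mathbf{s}\in\mathbb{R}^n:\tfrac12\mathbf{s}^TA\mathbf{s}+\mathbf{b}^T\mathbf{s}+c=0\}$ with $A$ a nonzero real symmetric matrix, and assume $\mathcal{S}$ contains at least two points but no line. Let $T$ be an invertible real $n\times n$ matrix and $\mathbf{v}\in\mathbb{R}^n$ such that under $\mathbf{s}=T\mathbf{s}'+\mathbf{v}$ the equation of $\mathcal{S}$ becomes one of: (1) (when $\operatorname{rk}A=n-1$) $\sum_{j=1}^{n-1}\epsilon_js_j'^2=s_n'$ with $\epsilon_j\in\{-1,1\}$; (2) (when $\operatorname{rk}A=n$ and $A$ has eigenvalues of both signs) $s_1's_n'+\sum_{j=2}^{n-1}\epsilon_js_j'^2=c'$ with $c'\neq0$, $\epsilon_j\in\{-1,1\}$; (3) (when $\operatorname{rk}A=n$ and all eigenvalues of $A$ have the same sign) $\sum_{j=1}^ns_j'^2=1$. The parameterisation $\boldsymbol{\sigma}'=(\sigma_1',\dots,\sigma_n')^T$ of the normal form is: in case (1), $\sigma_j'(\mathbf{t})=t_j$ for $j\le n-1$, $\sigma_n'(\mathbf{t})=\sum_{j=1}^{n-1}\epsilon_jt_j^2$, $D=\mathbb{R}^{n-1}$; in case (2), $\sigma_j'(\mathbf{t})=t_j$ for $j\le n-1$, $\sigma_n'(\mathbf{t})=\frac{1}{t_1}\big(c'-\sum_{j=2}^{n-1}\epsilon_jt_j^2\big)$, $D=(\mathbb{R}\setminus\{0\})\times\mathbb{R}^{n-2}$; in case (3), $\boldsymbol{\sigma}'(\mathbf{t})=\boldsymbol{\tau}(\boldsymbol{\varphi})$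 with $\varphi_j=2\arctan(t_j)$, where $\boldsymbol{\tau}$ is the spherical-coordinate map $\tau_1=\cos\varphi_1$, $\tau_k=\sin\varphi_1\cdots\sin\varphi_{k-1}\cos\varphi_k$ for $2\le k\le n-1$, $\tau_n=\sin\varphi_1\cdots\sin\varphi_{n-1}$, $D=\mathbb{R}^{n-1}$. Then $\boldsymbol{\sigma}(\mathbf{t})=T\boldsymbol{\sigma}'(\mathbf{t})+\mathbf{v}$ with components $\sigma_1,\dots,\sigma_n$, and $\sigma_1^{-1}(0)$ is the zero set of $\sigma_1$. *)

theory Defs
  imports Complex_Main "HOL-Analysis.Derivative" "Jordan_Normal_Form.Determinant" "Jordan_Normal_Form.Char_Poly"
    "Jordan_Normal_Form.DL_Rank"
begin

text \<open>Vectors in R^k are JNF vectors of dimension k, indexed 0..k-1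
  (paper index j corresponds to index j-1 here).\<close>

definition quadric :: "nat \<Rightarrow> real mat \<Rightarrow> real vec \<Rightarrow> real \<Rightarrow> real vec set" where
  "quadric n A b c = {s \<in> carrier_vec n. (1/2) * (s \<bullet> (A *\<^sub>v s)) + b \<bullet> s + c = 0}"

definition contains_line :: "nat \<Rightarrow> real vec set \<Rightarrow> bool" where
  "contains_line n S = (\<exists>p d. p \<in> carrier_vec n \<and> d \<in> carrier_vec n \<and> d \<noteq> 0\<^sub>v n \<and>
      (\<forall>r::real. p + r \<cdot>\<^sub>v d \<in> S))"

definition mat_rank :: "nat \<Rightarrow> real mat \<Rightarrow> nat" where
  "mat_rank n A = vec_space.rank n A"

datatype nf_case = Paraboloid | Hyperboloid | Ellipsoid

definition normal_form :: "nf_case \<Rightarrow> nat \<Rightarrow> (nat \<Rightarrow> real) \<Rightarrow> real \<Rightarrow> real vec \<Rightarrow> bool" where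
  "normal_form k n eps c' s' = (case k of
      Paraboloid \<Rightarrow> (\<Sum>j<n-1. eps j * (s' $ j)^2) = s' $ (n-1)
    | Hyperboloid \<Rightarrow> s' $ 0 * s' $ (n-1) + (\<Sum>j\<in>{1..<n-1}. eps j * (s' $ j)^2) = c'
    | Ellipsoid \<Rightarrow> (\<Sum>j<n. (s' $ j)^2) = 1)"

definition sph :: "nat \<Rightarrow> real vec \<Rightarrow> real vec" where
  "sph n phi = vec n (\<lambda>k. (\<Prod>i<k. sin (phi $ i)) * (if k = n-1 then 1 else cos (phi $ k)))"

definition sigma' :: "nf_case \<Rightarrow> nat \<Rightarrow> (nat \<Rightarrow> real) \<Rightarrow> real \<Rightarrow> real vec \<Rightarrow> real vec" where
  "sigma' k n eps c' t = (case k of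
      Paraboloid \<Rightarrow> vec n (\<lambda>j. if j < n-1 then t $ j else (\<Sum>i<n-1. eps i * (t $ i)^2))
    | Hyperboloid \<Rightarrow> vec n (\<lambda>j. if j < n-1 then t $ j
          else (1 / t $ 0) * (c' - (\<Sum>i\<in>{1..<n-1}. eps i * (t $ i)^2)))
    | Ellipsoid \<Rightarrow> sph n (vec (n-1) (\<lambda>j. 2 * arctan (t $ j))))"

definition param_dom :: "nf_case \<Rightarrow> nat \<Rightarrow> real vec set" where
  "param_dom k n = (case k of
      Hyperboloid \<Rightarrow> {t \<in> carrier_vec (n-1). t $ 0 \<noteq> 0}
    | _ \<Rightarrow> carrier_vec (n-1))"

definition sigma :: "real mat \<Rightarrow> real vec \<Rightarrow> nf_case \<Rightarrow> nat \<Rightarrow> (nat \<Rightarrow> real) \<Rightarrow> real \<Rightarrow> real vec \<Rightarrow> real vec" where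
  "sigma T v k n eps c' t = T *\<^sub>v sigma' k n eps c' t + v"

definition open_vec :: "nat \<Rightarrow> real vec set \<Rightarrow> bool" where
  "open_vec m U = (U \<subseteq> carrier_vec m \<and>
     (\<forall>t\<in>U. \<exists>e>0. \<forall>u\<in>carrier_vec m. sqrt (\<Sum>i<m. (u $ i - t $ i)^2) < e \<longrightarrow> u \<in> U))"

definition vupd :: "real vec \<Rightarrow> nat \<Rightarrow> real \<Rightarrow> real vec" where
  "vupd t j x = vec (dim_vec t) (\<lambda>i. if i = j then x else t $ i)"

definition jacobian :: "nat \<Rightarrow> nat \<Rightarrow> (real vec \<Rightarrow> real vec) \<Rightarrow> real vec \<Rightarrow> real mat" where
  "jacobian p m f t = mat p m (\<lambda>(i,j). deriv (\<lambda>x. f (vupd t j x) $ i) (t $ j))"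

definition vtrunc :: "nat \<Rightarrow> real vec \<Rightarrow> real vec" where
  "vtrunc n x = vec (n-1) (\<lambda>i. x $ i)"

definition hyperplane :: "nat \<Rightarrow> real vec \<Rightarrow> real \<Rightarrow> real vec set" where
  "hyperplane n a d = {s \<in> carrier_vec n. a \<bullet> s = d}"

end

theory Submission imports Defs begin

unbundle no vec_syntax

lemma vupd_dim[simp]: "dim_vec (vupd t j x) = dim_vec t" by (simp add: vupd_def)
lemma vupd_nth[simp]: "i < dim_vec t \<Longrightarrow> vupd t j x $ i = (if i = j then x else t $ i)"
  by (simp add: vupd_def)
lemma vupd_carrier: "t \<in> carrier_vec m \<Longrightarrow> vupd t j x \<in> carrier_vec m"
  by (intro carrier_vecI) (simp add: carrier_vecD)

lemma open_vupd:
  assumes "open_vec m U" "t \<in> U" "j < m"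
  shows "\<exists>e>0. \<forall>x. \<bar>x - t$j\<bar> < e \<longrightarrow> vupd t j x \<in> U"
proof -
  have o1: "U \<subseteq> carrier_vec m" and o2: "\<forall>t\<in>U. \<exists>e>0. \<forall>u\<in>carrier_vec m. sqrt (\<Sum>i<m. (u $ i - t $ i)^2) < e \<longrightarrow> u \<in> U"
    using assms(1) unfolding open_vec_def by (rule conjunct1, rule conjunct2)
  from o2 assms(2) obtain e where e: "e>0" and eU: "\<forall>u\<in>carrier_vec m. sqrt (\<Sum>i<m. (u $ i - t $ i)^2) < e \<longrightarrow> u \<in> U"
    by auto
  have tc: "t \<in> carrier_vec m" using o1 assms(2) by (rule subsetD)
  have "vupd t j x \<in> U" if x: "\<bar>x - t$j\<bar> < e" for x
  proof -
    have vc: "vupd t j x \<in> carrier_vec m" using tc by (rule vupd_carrier)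
    have dt: "dim_vec t = m" using tc by simp
    have "(\<Sum>i<m. (vupd t j x $ i - t $ i)^2) = (\<Sum>i<m. if i = j then (x - t$j)^2 else 0)"
      by (rule sum.cong) (simp_all add: dt)
    also have "\<dots> = (x - t$j)^2" using assms(3) by (simp add: sum.delta)
    finally have "sqrt (\<Sum>i<m. (vupd t j x $ i - t $ i)^2) = \<bar>x - t$j\<bar>" by simp
    with x have "sqrt (\<Sum>i<m. (vupd t j x $ i - t $ i)^2) < e" by simp
    with eU vc show ?thesis by blast
  qed
  with e show ?thesis by blast
qed

lemma quad3:
  fixes A B C x0 h :: real
  assumes h: "h \<noteq> 0" and e0: "A*x0^2 + B*x0 + C = 0" and e1: "A*(x0+h)^2 + B*(x0+h) + C = 0"
    and e2: "A*(x0-h)^2 + B*(x0-h) + C = 0"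
  shows "A = 0 \<and> B = 0 \<and> C = 0"
proof -
  have "(A*(x0+h)^2 + B*(x0+h) + C) + (A*(x0-h)^2 + B*(x0-h) + C) - 2*(A*x0^2 + B*x0 + C) = 2*A*h^2"
    by (simp add: power2_eq_square algebra_simps)
  then have "A * h^2 = 0" using e0 e1 e2 by simp
  then have A: "A = 0" using h by simp
  have s1: "B*(x0+h) + C = 0" using e1 A by simp
  have s2: "B*(x0-h) + C = 0" using e2 A by simp
  have "2*(B*h) = (B*(x0+h) + C) - (B*(x0-h) + C)" by (simp add: algebra_simps)
  then have "2*(B*h) = 0" using s1 s2 by simp
  then have "B * h = 0" by simp
  then have B: "B = 0" using h by simp
  show ?thesis using A B e0 by simp
qed

lemma vary:
  fixes A B C z e :: real
  assumes "e > 0" "\<And>x. \<bar>x - z\<bar> < e \<Longrightarrow> A*x^2 + B*x + C = 0"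
  shows "A = 0 \<and> B = 0 \<and> C = 0"
proof (rule quad3[of "e/2" A z B C])
  show "e/2 \<noteq> 0" using assms(1) by simp
  have "\<bar>z - z\<bar> < e" using assms(1) by simp
  from assms(2)[OF this] show "A*z^2 + B*z + C = 0" .
  have "\<bar>(z+e/2) - z\<bar> < e" using assms(1) by simp
  from assms(2)[OF this] show "A*(z+e/2)^2 + B*(z+e/2) + C = 0" .
  have "\<bar>(z-e/2) - z\<bar> < e" using assms(1) by simp
  from assms(2)[OF this] show "A*(z-e/2)^2 + B*(z-e/2) + C = 0" .
qed

lemma sum_vupd_in:
  fixes g :: "nat \<Rightarrow> real \<Rightarrow> real"
  assumes "finite S" "j \<in> S" "S \<subseteq> {..<dim_vec t}"
  shows "(\<Sum>i\<in>S. g i (vupd t j x $ i)) = (\<Sum>i\<in>S. g i (t $ i)) - g j (t$j) + g j x"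
proof -
  have "(\<Sum>i\<in>S. g i (vupd t j x $ i)) = g j (vupd t j x $ j) + (\<Sum>i\<in>S-{j}. g i (vupd t j x $ i))"
    using sum.remove[OF assms(1,2)] by blast
  also have "(\<Sum>i\<in>S-{j}. g i (vupd t j x $ i)) = (\<Sum>i\<in>S-{j}. g i (t $ i))"
    using assms(3) by (intro sum.cong) auto
  also have "(\<Sum>i\<in>S. g i (t $ i)) = g j (t $ j) + (\<Sum>i\<in>S-{j}. g i (t $ i))"
    using sum.remove[OF assms(1,2)] by blast
  moreover have "vupd t j x $ j = x" using assms by auto
  ultimately show ?thesis by (simp add: algebra_simps)
qed

lemma sum_vupd_notin:
  assumes "j \<notin> S" "S \<subseteq> {..<dim_vec t}"
  shows "(\<Sum>i\<in>S. g i (vupd t j x $ i)) = (\<Sum>i\<in>S. g i (t $ i))"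
  using assms by (intro sum.cong) auto

lemma para_core:
  assumes n2: "n \<ge> 2" and eps: "\<forall>j<n-1. eps j \<in> {-1,1}" and t0: "t0 \<in> U" and op: "open_vec (n-1) U"
    and H: "\<forall>t\<in>U. (\<Sum>i<n. a i * sigma' Paraboloid n eps c' t $ i) = d"
  shows "\<forall>i<n. a i = 0"
proof -
  have Uc: "U \<subseteq> carrier_vec (n-1)" using op open_vec_def by auto
  have F: "(\<Sum>i<n. a i * sigma' Paraboloid n eps c' t $ i) = (\<Sum>i<n-1. a i * t$i) + a (n-1) * (\<Sum>i<n-1. eps i * (t$i)^2)" for t
  proof -
    have "n = Suc (n-1)" using n2 by simp
    then have "(\<Sum>i<n. a i * sigma' Paraboloid n eps c' t $ i) = (\<Sum>i<n-1. a i * sigma' Paraboloid n eps c' t $ i) + a (n-1) * sigma' Paraboloid n eps c' t $ (n-1)"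
      by (metis sum.lessThan_Suc)
    also have "(\<Sum>i<n-1. a i * sigma' Paraboloid n eps c' t $ i) = (\<Sum>i<n-1. a i * t$i)"
      by (intro sum.cong) (auto simp: sigma'_def)
    finally show ?thesis using n2 by (simp add: sigma'_def)
  qed
  have key: "a (n-1) * eps j = 0 \<and> a j = 0" if j: "j < n-1" for j
  proof -
    obtain e where e: "e>0" "\<forall>x. \<bar>x - t0$j\<bar> < e \<longrightarrow> vupd t0 j x \<in> U" using open_vupd[OF op t0 j] by blast
    have t0c: "dim_vec t0 = n-1" using Uc t0 by auto
    let ?C = "((\<Sum>i<n-1. a i * t0$i) - a j * t0$j) + a (n-1) * ((\<Sum>i<n-1. eps i * (t0$i)^2) - eps j * (t0$j)^2) - d"
    have "(a (n-1) * eps j) * x^2 + a j * x + ?C = 0" if "\<bar>x - t0$j\<bar> < e" for x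
    proof -
      have "vupd t0 j x \<in> U" using e that by blast
      then have "(\<Sum>i<n. a i * sigma' Paraboloid n eps c' (vupd t0 j x) $ i) = d" using H by blast
      then have E: "(\<Sum>i<n-1. a i * vupd t0 j x $ i) + a (n-1) * (\<Sum>i<n-1. eps i * (vupd t0 j x $ i)^2) = d" by (simp only: F)
      have E1: "(\<Sum>i<n-1. a i * vupd t0 j x $ i) = (\<Sum>i<n-1. a i * t0$i) - a j * t0$j + a j * x"
        using sum_vupd_in[of "{..<n-1}" j t0 "\<lambda>i y. a i * y" x] j t0c by simp
      have E2: "(\<Sum>i<n-1. eps i * (vupd t0 j x $ i)^2) = (\<Sum>i<n-1. eps i * (t0$i)^2) - eps j * (t0$j)^2 + eps j * x^2"
        using sum_vupd_in[of "{..<n-1}" j t0 "\<lambda>i y. eps i * y^2" x] j t0c by simp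
      have "((\<Sum>i<n-1. a i * t0$i) - a j * t0$j + a j * x) + a (n-1) * ((\<Sum>i<n-1. eps i * (t0$i)^2) - eps j * (t0$j)^2 + eps j * x^2) = d"
        using E unfolding E1 E2 .
      then show ?thesis by (simp add: algebra_simps)
    qed
    from vary[OF e(1) this] show ?thesis by simp
  qed
  have "eps 0 \<in> {-1,1}" using eps n2 by simp
  then have "eps 0 \<noteq> 0" by auto
  moreover have "a (n-1) * eps 0 = 0" using key[of 0] n2 by simp
  ultimately have "a (n-1) = 0" by simp
  show ?thesis
  proof (intro allI impI)
    fix i assume "i < n"
    then have "i < n-1 \<or> i = n-1" by linarith
    then show "a i = 0" using key \<open>a (n-1) = 0\<close> by blast
  qed
qed


lemma hyp_core:
  assumes n2: "n \<ge> 2" and eps: "\<forall>j\<in>{1..<n-1}. eps j \<in> {-1,1}" and c': "c' \<noteq> 0"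
    and t0: "t0 \<in> U" and op: "open_vec (n-1) U" and nz: "\<forall>t\<in>U. t$0 \<noteq> 0"
    and H: "\<forall>t\<in>U. (\<Sum>i<n. a i * sigma' Hyperboloid n eps c' t $ i) = d"
  shows "\<forall>i<n. a i = 0"
proof -
  have Uc: "U \<subseteq> carrier_vec (n-1)" using op open_vec_def by auto
  have t0c: "dim_vec t0 = n-1" using Uc t0 by auto
  let ?S = "\<lambda>t. (\<Sum>i\<in>{1..<n-1}. eps i * (t$i)^2)"
  have F: "(\<Sum>i<n. a i * sigma' Hyperboloid n eps c' t $ i) = (\<Sum>i<n-1. a i * t$i) + a (n-1) * ((1 / t$0) * (c' - ?S t))" for t
  proof -
    have "n = Suc (n-1)" using n2 by simp
    then have "(\<Sum>i<n. a i * sigma' Hyperboloid n eps c' t $ i) = (\<Sum>i<n-1. a i * sigma' Hyperboloid n eps c' t $ i) + a (n-1) * sigma' Hyperboloid n eps c' t $ (n-1)"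
      by (metis sum.lessThan_Suc)
    also have "(\<Sum>i<n-1. a i * sigma' Hyperboloid n eps c' t $ i) = (\<Sum>i<n-1. a i * t$i)"
      by (intro sum.cong) (auto simp: sigma'_def)
    finally show ?thesis using n2 by (simp add: sigma'_def)
  qed
  have y0: "t0$0 \<noteq> 0" using nz t0 by blast
  have keyA: "a 0 = 0 \<and> a (n-1) * (c' - ?S t0) = 0"
  proof -
    have j: "0 < n-1" using n2 by simp
    obtain e where e: "e>0" "\<forall>x. \<bar>x - t0$0\<bar> < e \<longrightarrow> vupd t0 0 x \<in> U" using open_vupd[OF op t0 j] by blast
    let ?R = "(\<Sum>i<n-1. a i * t0$i) - a 0 * t0$0"
    let ?K = "c' - ?S t0"
    have "a 0 * x^2 + (?R - d) * x + a (n-1) * ?K = 0" if "\<bar>x - t0$0\<bar> < e" for x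
    proof -
      have U1: "vupd t0 0 x \<in> U" using e that by blast
      then have "(\<Sum>i<n. a i * sigma' Hyperboloid n eps c' (vupd t0 0 x) $ i) = d" using H by blast
      then have E: "(\<Sum>i<n-1. a i * vupd t0 0 x $ i) + a (n-1) * ((1 / vupd t0 0 x $ 0) * (c' - ?S (vupd t0 0 x))) = d"
        by (simp only: F)
      have E0: "vupd t0 0 x $ 0 = x" using t0c j by simp
      have xnz: "x \<noteq> 0" using nz U1 E0 by metis
      have E1: "(\<Sum>i<n-1. a i * vupd t0 0 x $ i) = (\<Sum>i<n-1. a i * t0$i) - a 0 * t0$0 + a 0 * x"
        using sum_vupd_in[of "{..<n-1}" 0 t0 "\<lambda>i y. a i * y" x] j t0c by simp
      have E2: "?S (vupd t0 0 x) = ?S t0"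
        using sum_vupd_notin[of 0 "{1..<n-1}" t0 "\<lambda>i y. eps i * y^2" x] t0c by auto
      have E3: "?R + a 0 * x + a (n-1) * ((1 / x) * ?K) = d"
        using E unfolding E0 E1 E2 by simp
      have "a 0 * x^2 + (?R - d) * x + a (n-1) * ?K = x * (?R + a 0 * x + a (n-1) * ((1 / x) * ?K) - d)"
        using xnz by (simp add: field_simps power2_eq_square)
      also have "\<dots> = 0" using E3 by simp
      finally show ?thesis .
    qed
    from vary[OF e(1) this] show ?thesis by simp
  qed
  have keyB: "a (n-1) = 0 \<and> a j = 0" if j: "j \<in> {1..<n-1}" for j
  proof -
    have j': "j < n-1" using j by simp
    obtain e where e: "e>0" "\<forall>x. \<bar>x - t0$j\<bar> < e \<longrightarrow> vupd t0 j x \<in> U" using open_vupd[OF op t0 j'] by blast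
    let ?y = "t0$0"
    let ?A = "- (a (n-1) * eps j * (1 / ?y))"
    let ?C = "((\<Sum>i<n-1. a i * t0$i) - a j * t0$j) + a (n-1) * ((1 / ?y) * (c' - ?S t0 + eps j * (t0$j)^2)) - d"
    have "?A * x^2 + a j * x + ?C = 0" if "\<bar>x - t0$j\<bar> < e" for x
    proof -
      have U1: "vupd t0 j x \<in> U" using e that by blast
      then have "(\<Sum>i<n. a i * sigma' Hyperboloid n eps c' (vupd t0 j x) $ i) = d" using H by blast
      then have E: "(\<Sum>i<n-1. a i * vupd t0 j x $ i) + a (n-1) * ((1 / vupd t0 j x $ 0) * (c' - ?S (vupd t0 j x))) = d"
        by (simp only: F)
      have d0: "0 < dim_vec t0" using t0c j by auto
      have "0 \<noteq> j" using j by auto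
      then have E0: "vupd t0 j x $ 0 = ?y" using vupd_nth[OF d0] by simp
      have E1: "(\<Sum>i<n-1. a i * vupd t0 j x $ i) = (\<Sum>i<n-1. a i * t0$i) - a j * t0$j + a j * x"
        using sum_vupd_in[of "{..<n-1}" j t0 "\<lambda>i y. a i * y" x] j' t0c by simp
      have E2: "?S (vupd t0 j x) = ?S t0 - eps j * (t0$j)^2 + eps j * x^2"
      proof -
        have sub: "{1..<n-1} \<subseteq> {..<dim_vec t0}" using t0c by auto
        show ?thesis
          using sum_vupd_in[of "{1..<n-1}" j t0 "\<lambda>i y. eps i * y^2" x, OF finite_atLeastLessThan j sub] by (simp only:)
      qed
      have E3: "((\<Sum>i<n-1. a i * t0$i) - a j * t0$j + a j * x) + a (n-1) * ((1 / ?y) * (c' - (?S t0 - eps j * (t0$j)^2 + eps j * x^2))) = d"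
        using E unfolding E0 E1 E2 .
      have "?A * x^2 + a j * x + ?C = ((\<Sum>i<n-1. a i * t0$i) - a j * t0$j + a j * x) + a (n-1) * ((1 / ?y) * (c' - (?S t0 - eps j * (t0$j)^2 + eps j * x^2))) - d"
        by (simp add: algebra_simps)
      also have "\<dots> = 0" using E3 by simp
      finally show ?thesis .
    qed
    from vary[OF e(1) this] have A0: "?A = 0" and "a j = 0" by auto
    have "eps j \<in> {-1,1}" using eps j by blast
    then have "eps j \<noteq> 0" by auto
    with A0 y0 have "a (n-1) = 0" by simp
    with \<open>a j = 0\<close> show ?thesis by simp
  qed
  show ?thesis
  proof (cases "n = 2")
    case True
    have n1: "n - 1 = 1" using True by simp
    have "{1..<n-1} = {}" using n1 by simp
    then have "?S t0 = 0" by (simp only: sum.empty)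
    then have "a (n-1) * c' = 0" using keyA by (simp only: diff_zero)
    then have "a (n-1) = 0" using c' by simp
    then have "a 1 = 0" unfolding n1 .
    show ?thesis
    proof (intro allI impI)
      fix i assume "i < n"
      then have "i = 0 \<or> i = 1" using True by auto
      then show "a i = 0" using keyA \<open>a 1 = 0\<close> by auto
    qed
  next
    case False
    then have "1 \<in> {1..<n-1}" using n2 by simp
    then have an: "a (n-1) = 0" using keyB by blast
    show ?thesis
    proof (intro allI impI)
      fix i assume i: "i < n"
      then have "i = 0 \<or> i \<in> {1..<n-1} \<or> i = n-1" by auto
      then show "a i = 0" using keyA keyB an by blast
    qed
  qed
qed

definition s2a :: "real \<Rightarrow> real" where "s2a x = sin (2 * arctan x)"
definition c2a :: "real \<Rightarrow> real" where "c2a x = cos (2 * arctan x)"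

lemma c2a_eq: "c2a x = (1 - x^2) / (1 + x^2)"
proof -
  have "0 \<le> x^2" by simp
  then have p: "0 < 1 + x^2" by linarith
  have "c2a x = (cos (arctan x))^2 - (sin (arctan x))^2" unfolding c2a_def by (rule cos_double)
  also have "\<dots> = 1 / (1 + x^2) - x^2 / (1 + x^2)"
    using p by (simp add: cos_arctan sin_arctan power_divide)
  finally show ?thesis by (simp add: diff_divide_distrib)
qed

lemma s2a_eq: "s2a x = 2 * x / (1 + x^2)"
proof -
  have "0 \<le> x^2" by simp
  then have p: "0 < 1 + x^2" by linarith
  have "s2a x = 2 * sin (arctan x) * cos (arctan x)" unfolding s2a_def by (rule sin_double)
  also have "\<dots> = 2 * x / (sqrt (1 + x^2) * sqrt (1 + x^2))"
    by (simp add: cos_arctan sin_arctan)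
  also have "sqrt (1 + x^2) * sqrt (1 + x^2) = 1 + x^2" using p by simp
  finally show ?thesis .
qed

lemma ell_nth:
  assumes m: "m < n" and dt: "dim_vec t = n-1"
  shows "sigma' Ellipsoid n eps c' t $ m = (\<Prod>i<m. s2a (t$i)) * (if m = n-1 then 1 else c2a (t$m))"
proof -
  have "sigma' Ellipsoid n eps c' t $ m = (\<Prod>i<m. sin (vec (n-1) (\<lambda>j. 2 * arctan (t$j)) $ i)) * (if m = n-1 then 1 else cos (vec (n-1) (\<lambda>j. 2 * arctan (t$j)) $ m))"
    using m by (simp add: sigma'_def sph_def)
  also have "(\<Prod>i<m. sin (vec (n-1) (\<lambda>j. 2 * arctan (t$j)) $ i)) = (\<Prod>i<m. s2a (t$i))"
    using m by (intro prod.cong) (auto simp: s2a_def)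
  also have "(if m = n-1 then 1 else cos (vec (n-1) (\<lambda>j. 2 * arctan (t$j)) $ m)) = (if m = n-1 then 1 else c2a (t$m))"
    using m by (auto simp: c2a_def)
  finally show ?thesis .
qed

lemma prod_split3:
  fixes f :: "nat \<Rightarrow> real"
  assumes "k < m"
  shows "(\<Prod>i<m. f i) = (\<Prod>i<k. f i) * f k * (\<Prod>i\<in>{k<..<m}. f i)"
proof -
  have eq: "{..<m} = {..<k} \<union> insert k {k<..<m}" using assms by auto
  have "(\<Prod>i\<in>{..<k} \<union> insert k {k<..<m}. f i) = (\<Prod>i<k. f i) * (\<Prod>i\<in>insert k {k<..<m}. f i)"
    by (rule prod.union_disjoint) auto
  also have "(\<Prod>i\<in>insert k {k<..<m}. f i) = f k * (\<Prod>i\<in>{k<..<m}. f i)" by simp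
  finally show ?thesis unfolding eq by (simp add: mult.assoc)
qed

lemma ell_term:
  assumes dt: "dim_vec t = n-1" and k: "k < n-1" and m: "m < n"
  shows "sigma' Ellipsoid n eps c' (vupd t k x) $ m =
    (if m < k then sigma' Ellipsoid n eps c' t $ m else 0)
    + (if m = k then (\<Prod>i<k. s2a (t$i)) else 0) * c2a x
    + (if k < m then (\<Prod>i<k. s2a (t$i)) * ((\<Prod>i\<in>{k<..<m}. s2a (t$i)) * (if m = n-1 then 1 else c2a (t$m))) else 0) * s2a x"
proof -
  have dv: "dim_vec (vupd t k x) = n-1" using dt by simp
  have L: "sigma' Ellipsoid n eps c' (vupd t k x) $ m = (\<Prod>i<m. s2a (vupd t k x $ i)) * (if m = n-1 then 1 else c2a (vupd t k x $ m))"
    by (rule ell_nth[OF m dv])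
  consider "m < k" | "m = k" | "k < m" by linarith
  then show ?thesis
  proof cases
    case 1
    have "(\<Prod>i<m. s2a (vupd t k x $ i)) = (\<Prod>i<m. s2a (t $ i))"
      using 1 k dt by (intro prod.cong) auto
    moreover have "m \<noteq> n-1" using 1 k by simp
    moreover have "vupd t k x $ m = t $ m" using 1 k dt by simp
    ultimately show ?thesis using 1 L ell_nth[OF m dt] by simp
  next
    case 2
    have "(\<Prod>i<m. s2a (vupd t k x $ i)) = (\<Prod>i<k. s2a (t $ i))"
      using 2 k dt by (intro prod.cong) auto
    moreover have "m \<noteq> n-1" using 2 k by simp
    moreover have "vupd t k x $ m = x" using 2 k dt by simp
    ultimately show ?thesis using 2 L by simp
  next
    case 3
    have "(\<Prod>i<m. s2a (vupd t k x $ i)) = (\<Prod>i<k. s2a (vupd t k x $ i)) * s2a (vupd t k x $ k) * (\<Prod>i\<in>{k<..<m}. s2a (vupd t k x $ i))"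
      by (rule prod_split3[OF 3])
    also have "(\<Prod>i<k. s2a (vupd t k x $ i)) = (\<Prod>i<k. s2a (t $ i))"
      using k dt by (intro prod.cong) auto
    also have "(\<Prod>i\<in>{k<..<m}. s2a (vupd t k x $ i)) = (\<Prod>i\<in>{k<..<m}. s2a (t $ i))"
      using m dt by (intro prod.cong) auto
    also have "vupd t k x $ k = x" using k dt by simp
    finally have P: "(\<Prod>i<m. s2a (vupd t k x $ i)) = (\<Prod>i<k. s2a (t $ i)) * s2a x * (\<Prod>i\<in>{k<..<m}. s2a (t $ i))" .
    have C: "(if m = n-1 then 1 else c2a (vupd t k x $ m)) = (if m = n-1 then 1 else c2a (t $ m))"
      using 3 m dt by auto
    show ?thesis using 3 unfolding L P C by (simp add: mult_ac)
  qed
qed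


lemma ell_core:
  assumes n2: "n \<ge> 2" and t0: "t0 \<in> U" and op: "open_vec (n-1) U"
    and P: "\<forall>i<n-2. s2a (t0$i) \<noteq> 0"
    and H: "\<forall>t\<in>U. (\<Sum>i<n. a i * sigma' Ellipsoid n eps c' t $ i) = d"
  shows "\<forall>i<n. a i = 0"
proof -
  have Uc: "U \<subseteq> carrier_vec (n-1)" using op open_vec_def by auto
  have t0c: "dim_vec t0 = n-1" using Uc t0 by auto
  define Pk where "Pk k = (\<Prod>i<k. s2a (t0$i))" for k
  define u where "u k m = (if m < k then sigma' Ellipsoid n eps c' t0 $ m else 0)" for k m
  define v where "v k m = (if m = k then Pk k else 0)" for k m
  define w where "w k m = (if k < m then Pk k * ((\<Prod>i\<in>{k<..<m}. s2a (t0$i)) * (if m = n-1 then 1 else c2a (t0$m))) else 0)" for k m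
  have key: "a k * Pk k = 0 \<and> (\<Sum>m<n. a m * w k m) = 0" if k: "k < n-1" for k
  proof -
    obtain e where e: "e>0" "\<forall>x. \<bar>x - t0$k\<bar> < e \<longrightarrow> vupd t0 k x \<in> U" using open_vupd[OF op t0 k] by blast
    define U0 where "U0 = (\<Sum>m<n. a m * u k m)"
    define V where "V = (\<Sum>m<n. a m * v k m)"
    define W where "W = (\<Sum>m<n. a m * w k m)"
    have "(U0 - d - V) * x^2 + (2 * W) * x + (U0 - d + V) = 0" if "\<bar>x - t0$k\<bar> < e" for x
    proof -
      have "vupd t0 k x \<in> U" using e that by blast
      then have E: "(\<Sum>m<n. a m * sigma' Ellipsoid n eps c' (vupd t0 k x) $ m) = d" using H by blast
      have "(\<Sum>m<n. a m * sigma' Ellipsoid n eps c' (vupd t0 k x) $ m) = (\<Sum>m<n. a m * u k m + (a m * v k m) * c2a x + (a m * w k m) * s2a x)"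
      proof (rule sum.cong[OF refl])
        fix m assume "m \<in> {..<n}"
        then have m: "m < n" by simp
        show "a m * sigma' Ellipsoid n eps c' (vupd t0 k x) $ m = a m * u k m + (a m * v k m) * c2a x + (a m * w k m) * s2a x"
          unfolding ell_term[OF t0c k m] u_def v_def w_def Pk_def by (simp add: algebra_simps)
      qed
      also have "\<dots> = U0 + V * c2a x + W * s2a x"
        unfolding U0_def V_def W_def by (simp add: sum.distrib sum_distrib_right)
      finally have E2: "U0 + V * c2a x + W * s2a x = d" using E by simp
      then have E3: "U0 + V * ((1 - x^2)/(1+x^2)) + W * (2*x/(1+x^2)) = d" by (simp only: c2a_eq s2a_eq)
      have "0 \<le> x^2" by simp
      then have p: "1 + x^2 \<noteq> 0" by linarith
      have q1: "(1+x^2) * (V*((1-x^2)/(1+x^2))) = V*(1-x^2)" using p by simp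
      have q2: "(1+x^2) * (W*(2*x/(1+x^2))) = W*(2*x)" using p by simp
      have aux: "\<And>q Y Z :: real. q * (U0 + Y + Z - d) = q*(U0-d) + q*Y + q*Z" by (simp add: algebra_simps)
      have "(1 + x^2) * (U0 + V * ((1 - x^2)/(1+x^2)) + W * (2*x/(1+x^2)) - d) = (1+x^2)*(U0-d) + V*(1-x^2) + W*(2*x)"
        unfolding aux q1 q2 ..
      also have "\<dots> = (U0 - d - V) * x^2 + (2 * W) * x + (U0 - d + V)" by (simp add: algebra_simps)
      finally show ?thesis using E3 by simp
    qed
    then have "U0 - d - V = 0 \<and> 2 * W = 0 \<and> U0 - d + V = 0"
      by (intro vary[where A="U0 - d - V" and B="2 * W" and C="U0 - d + V" and z="t0$k" and e=e, OF e(1)])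
    then have "U0 - d - V = 0" "2 * W = 0" "U0 - d + V = 0" by auto
    then have V0: "V = 0" and W0: "W = 0" by linarith+
    have "V = (\<Sum>m<n. if m = k then a k * Pk k else 0)"
      unfolding V_def by (intro sum.cong) (auto simp: v_def)
    also have "\<dots> = a k * Pk k" using k by simp
    finally show ?thesis using V0 W0 W_def by simp
  qed
  have Pnz: "Pk k \<noteq> 0" if "k \<le> n-2" for k
    unfolding Pk_def by (subst prod_zero_iff) (use P that in auto)
  have ak: "a k = 0" if "k < n-1" for k
    using key[OF that] Pnz[of k] that by auto
  have j: "n-2 < n-1" using n2 by simp
  have "(\<Sum>m<n. a m * w (n-2) m) = (\<Sum>m<n. if m = n-1 then a (n-1) * Pk (n-2) else 0)"
  proof (rule sum.cong[OF refl])
    fix m assume "m \<in> {..<n}"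
    then have "m \<le> n-2 \<or> m = n-1" by auto
    then show "a m * w (n-2) m = (if m = n-1 then a (n-1) * Pk (n-2) else 0)"
    proof
      assume "m \<le> n-2"
      then show ?thesis using n2 by (auto simp: w_def)
    next
      assume m: "m = n-1"
      have "{n-2<..<n-1} = {}" by auto
      then show ?thesis using m j by (simp add: w_def)
    qed
  qed
  also have "\<dots> = a (n-1) * Pk (n-2)" using n2 by simp
  finally have "a (n-1) * Pk (n-2) = 0" using key[OF j] by simp
  then have an: "a (n-1) = 0" using Pnz[of "n-2"] by simp
  show ?thesis
  proof (intro allI impI)
    fix i assume "i < n"
    then have "i < n-1 \<or> i = n-1" by linarith
    then show "a i = 0" using ak an by blast
  qed
qed

lemma jac_zero:
  assumes n2: "n \<ge> 2" and t0c: "dim_vec t0 = n-1" and i0: "i0 < n-2" and s0: "s2a (t0$i0) = 0"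
  shows "det (jacobian (n-1) (n-1) (\<lambda>t. vtrunc n (sigma' Ellipsoid n eps c' t)) t0) = 0"
proof -
  define J where "J = jacobian (n-1) (n-1) (\<lambda>t. vtrunc n (sigma' Ellipsoid n eps c' t)) t0"
  have Jc: "J \<in> carrier_mat (n-1) (n-1)" by (simp add: J_def jacobian_def)
  have j: "n-2 < n-1" using n2 by simp
  have col: "J $$ (r, n-2) = 0" if r: "r < n-1" for r
  proof -
    define c where "c = (if r < n-2 then sigma' Ellipsoid n eps c' t0 $ r else 0)"
    have fe: "(\<lambda>x. vtrunc n (sigma' Ellipsoid n eps c' (vupd t0 (n-2) x)) $ r) = (\<lambda>x. c)"
    proof
      fix x
      have rn: "r < n" using r by simp
      have "vtrunc n (sigma' Ellipsoid n eps c' (vupd t0 (n-2) x)) $ r = sigma' Ellipsoid n eps c' (vupd t0 (n-2) x) $ r"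
        using r by (simp add: vtrunc_def)
      also have "\<dots> = (if r < n-2 then sigma' Ellipsoid n eps c' t0 $ r else 0)
    + (if r = n-2 then (\<Prod>i<n-2. s2a (t0$i)) else 0) * c2a x
    + (if n-2 < r then (\<Prod>i<n-2. s2a (t0$i)) * ((\<Prod>i\<in>{n-2<..<r}. s2a (t0$i)) * (if r = n-1 then 1 else c2a (t0$r))) else 0) * s2a x"
        by (rule ell_term[OF t0c j rn])
      also have "(\<Prod>i<n-2. s2a (t0$i)) = 0" using i0 s0 by (subst prod_zero_iff) auto
      also have "(n-2 < r) = False" using r by simp
      finally show "vtrunc n (sigma' Ellipsoid n eps c' (vupd t0 (n-2) x)) $ r = c" by (simp add: c_def)
    qed
    have "J $$ (r, n-2) = deriv (\<lambda>x. vtrunc n (sigma' Ellipsoid n eps c' (vupd t0 (n-2) x)) $ r) (t0 $ (n-2))"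
      using r j by (simp add: J_def jacobian_def)
    also have "\<dots> = deriv (\<lambda>x. c) (t0 $ (n-2))" by (simp only: fe)
    also have "\<dots> = 0" by (rule DERIV_imp_deriv) (rule DERIV_const)
    finally show ?thesis .
  qed
  have "det J = (\<Sum>p | p permutes {0..<n-1}. signof p * (\<Prod>j<n-1. J $$ (p j, j)))" by (rule det_col[OF Jc])
  also have "\<dots> = 0"
  proof (rule sum.neutral, rule ballI)
    fix p assume "p \<in> {p. p permutes {0..<n-1}}"
    then have p: "p permutes {0..<n-1}" by simp
    have "p (n-2) \<in> {0..<n-1}" using p j by (simp add: permutes_in_image)
    then have "J $$ (p (n-2), n-2) = 0" using col by simp
    then have "(\<Prod>j<n-1. J $$ (p j, j)) = 0" using j by (intro prod_zero) auto
    then show "signof p * (\<Prod>j<n-1. J $$ (p j, j)) = 0" by simp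
  qed
  finally show ?thesis unfolding J_def .
qed

theorem lemma5:
  fixes n :: nat and A T :: "real mat" and b v :: "real vec" and c c' :: real
    and eps :: "nat \<Rightarrow> real" and k :: nf_case and U :: "real vec set"
  assumes n2: "n \<ge> 2"
    and A: "A \<in> carrier_mat n n" "transpose_mat A = A" "A \<noteq> 0\<^sub>m n n"
    and b: "b \<in> carrier_vec n"
    and two_points: "\<exists>p\<in>quadric n A b c. \<exists>q\<in>quadric n A b c. p \<noteq> q"
    and no_line: "\<not> contains_line n (quadric n A b c)"
    and T: "T \<in> carrier_mat n n" "invertible_mat T"
    and v: "v \<in> carrier_vec n"
    and nf: "\<forall>s'\<in>carrier_vec n. (T *\<^sub>v s' + v \<in> quadric n A b c \<longleftrightarrow> normal_form k n eps c' s')"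
    and cases:
      "(k = Paraboloid \<and> mat_rank n A = n - 1 \<and> (\<forall>j<n-1. eps j \<in> {-1, 1}))
     \<or> (k = Hyperboloid \<and> mat_rank n A = n
          \<and> (\<exists>l1 l2. eigenvalue A l1 \<and> l1 > 0 \<and> eigenvalue A l2 \<and> l2 < 0)
          \<and> c' \<noteq> 0 \<and> (\<forall>j\<in>{1..<n-1}. eps j \<in> {-1, 1}))
     \<or> (k = Ellipsoid \<and> mat_rank n A = n
          \<and> ((\<forall>l. eigenvalue A l \<longrightarrow> l > 0) \<or> (\<forall>l. eigenvalue A l \<longrightarrow> l < 0)))"
    and O_sub: "U \<subseteq> param_dom k n - {t. sigma T v k n eps c' t $ 0 = 0}"
    and O_open: "open_vec (n-1) U"
    and jac: "\<exists>t\<in>U. det (jacobian (n-1) (n-1) (\<lambda>t. vtrunc n (sigma' k n eps c' t)) t) \<noteq> 0"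
  shows "\<not> (\<exists>a d. a \<in> carrier_vec n \<and> a \<noteq> 0\<^sub>v n \<and>
              sigma T v k n eps c' ` U \<subseteq> hyperplane n a d)"
proof
  assume "\<exists>a d. a \<in> carrier_vec n \<and> a \<noteq> 0\<^sub>v n \<and> sigma T v k n eps c' ` U \<subseteq> hyperplane n a d"
  then obtain a d where ac: "a \<in> carrier_vec n" and anz: "a \<noteq> 0\<^sub>v n"
    and sub: "sigma T v k n eps c' ` U \<subseteq> hyperplane n a d" by blast
  obtain t0 where t0: "t0 \<in> U" and dj: "det (jacobian (n-1) (n-1) (\<lambda>t. vtrunc n (sigma' k n eps c' t)) t0) \<noteq> 0"
    using jac by blast
  have Uc: "U \<subseteq> carrier_vec (n-1)" using O_open open_vec_def by auto
  have t0c: "dim_vec t0 = n-1" using Uc t0 by auto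
  define a' where "a' = transpose_mat T *\<^sub>v a"
  have a'c: "a' \<in> carrier_vec n" using T(1) ac by (simp add: a'_def)
  have dimsig: "sigma' k n eps c' t \<in> carrier_vec n" for t
    by (intro carrier_vecI) (cases k, simp_all add: sigma'_def sph_def)
  have H: "\<forall>t\<in>U. (\<Sum>i<n. a' $ i * sigma' k n eps c' t $ i) = d - a \<bullet> v"
  proof
    fix t assume "t \<in> U"
    then have "sigma T v k n eps c' t \<in> hyperplane n a d" using sub by blast
    then have h1: "a \<bullet> (T *\<^sub>v sigma' k n eps c' t + v) = d" by (simp add: hyperplane_def sigma_def)
    have Ts: "T *\<^sub>v sigma' k n eps c' t \<in> carrier_vec n" using T(1) dimsig by simp
    have h2: "a \<bullet> (T *\<^sub>v sigma' k n eps c' t + v) = a \<bullet> (T *\<^sub>v sigma' k n eps c' t) + a \<bullet> v"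
      by (rule scalar_prod_add_distrib[OF ac Ts v])
    have h3: "a \<bullet> (T *\<^sub>v sigma' k n eps c' t) = a' \<bullet> sigma' k n eps c' t"
      unfolding a'_def by (rule transpose_vec_mult_scalar[OF T(1) dimsig ac, symmetric])
    have h4: "a' \<bullet> sigma' k n eps c' t = (\<Sum>i<n. a' $ i * sigma' k n eps c' t $ i)"
      using dimsig[of t] unfolding scalar_prod_def by (simp add: lessThan_atLeast0)
    show "(\<Sum>i<n. a' $ i * sigma' k n eps c' t $ i) = d - a \<bullet> v"
      using h1 h2 h3 h4 by linarith
  qed
  from cases consider (CP) "k = Paraboloid" "\<forall>j<n-1. eps j \<in> {-1, 1}"
    | (CH) "k = Hyperboloid" "c' \<noteq> 0" "\<forall>j\<in>{1..<n-1}. eps j \<in> {-1, 1}"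
    | (CE) "k = Ellipsoid" by blast
  then have zero: "\<forall>i<n. a' $ i = 0"
  proof cases
    case CP
    note k = CP(1) and eps = CP(2)
    show ?thesis
      using para_core[OF n2 eps t0 O_open, of "\<lambda>i. a' $ i" c' "d - a \<bullet> v"] H k by simp
  next
    case CH
    note k = CH(1) and c' = CH(2) and eps = CH(3)
    have nz: "\<forall>t\<in>U. t $ 0 \<noteq> 0" using O_sub k by (auto simp: param_dom_def)
    show ?thesis
      using hyp_core[OF n2 eps c' t0 O_open nz, of "\<lambda>i. a' $ i" "d - a \<bullet> v"] H k by simp
  next
    case CE
    note k = CE
    have P: "\<forall>i<n-2. s2a (t0$i) \<noteq> 0"
    proof (intro allI impI)
      fix i assume "i < n-2"
      show "s2a (t0$i) \<noteq> 0"
      proof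
        assume "s2a (t0$i) = 0"
        from jac_zero[OF n2 t0c \<open>i < n-2\<close> this] dj k show False by simp
      qed
    qed
    show ?thesis
      using ell_core[OF n2 t0 O_open P, of "\<lambda>i. a' $ i" eps c' "d - a \<bullet> v"] H k by simp
  qed
  have a'0: "a' = 0\<^sub>v n" using a'c zero by (intro eq_vecI) auto
  from T(2) obtain B where TB: "T * B = 1\<^sub>m (dim_row T)" and BT: "B * T = 1\<^sub>m (dim_row B)"
    unfolding invertible_mat_def inverts_mat_def by blast
  have dT: "dim_row T = n" "dim_col T = n" using T(1) by auto
  have "dim_col B = n" using arg_cong[OF TB, of dim_col] dT by simp
  moreover have "dim_row B = n" using arg_cong[OF BT, of dim_col] dT by simp
  ultimately have Bc: "B \<in> carrier_mat n n" by auto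
  have "transpose_mat (T * B) = transpose_mat B * transpose_mat T"
    by (rule transpose_mult[OF T(1) Bc])
  then have BtTt: "transpose_mat B * transpose_mat T = 1\<^sub>m n" using TB dT by simp
  have "a = 1\<^sub>m n *\<^sub>v a" using ac by simp
  also have "\<dots> = (transpose_mat B * transpose_mat T) *\<^sub>v a" using BtTt by simp
  also have "\<dots> = transpose_mat B *\<^sub>v a'"
    unfolding a'_def using Bc T(1) ac by (simp add: assoc_mult_mat_vec[of _ n n _ n])
  also have "\<dots> = 0\<^sub>v n" unfolding a'0 using Bc by (intro eq_vecI) (auto simp: scalar_prod_def)
  finally show False using anz by simp
qed

end
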